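(* Let $V$ be a Majorana algebra generated by a set $A$ of Majorana axes, and let $a_0, a_1 \in A$ with $\tau(a_1) = 1$. Then the vector $a_0^{\sigma(a_1)}$ satisfies axioms M3–M7 (with $a_0^{\sigma(a_1)}$ in place of $a$), and $\tau(a_0^{\sigma(a_1)}) = \tau(a_0)^{\sigma(a_1)}$, where $\tau(a_0)^{\sigma(a_1)} = \sigma(a_1)^{-1}\tau(a_0)\sigma(a_1)$.
   Context: Let $V$ be a real vector space with a positive definite symmetric bilinear form $(\,,\,)$ and a bilinear commutative (non-associative) product $\cdot$ such that (M1) $(u, v\cdot w) = (u\cdot v, w)$ for all $u,v,w\in V$, and (M2) $(u\cdot u, v\cdot v)\ge (u\cdot v, u\cdot v)$ for all $u,v \in V$. For $a \in V$ and $\mu \in \mathbb{R}$ write $V_\mu^{(a)} = \{v \in V : a\cdot v = \mu v\}$. A nonzero $a\in V$ is said to satisfy axioms M3–M7 if: (M3) $(a,a)=1$ and $a\cdot a = a$; (M4) $V = V_1^{(a)}\oplus V_0^{(a)}\oplus V_{1/4}^{(a)} \oplus V_{1/32}^{(a)}$; (M5) $V_1^{(a)} = \mathbb{R}a$; (M6) the linear map $\tau(a)$ of $V$ acting as $+1$ on $V_1^{(a)}\oplus V_0^{(a)}\oplus V_{1/4}^{(a)}$ and as $-1$ on $V_{1/32}^{(a)}$ preserves the algebra product; (M7) on $V_+^{(a)} := V_1^{(a)}\oplus V_0^{(a)}\oplus V_{1/4}^{(a)}$, the linear map $\sigma(a)$ acting as $+1$ on $V_1^{(a)}\oplus V_0^{(a)}$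 and as $-1$ on $V_{1/4}^{(a)}$ preserves the restriction of the algebra product to $V_+^{(a)}$. Elements satisfying M3–M7 are called Majorana axes, and $\tau(a)$ the Majorana involution of $a$. A Majorana algebra is such a $V$ (satisfying M1, M2) that is generated as an algebra by a set $A$ of Majorana axes. Linear maps act on the right: $u^{g}$ denotes the image of $u$ under $g$. *)

theory Defs
  imports Complex_Main
begin

definition bilinear_map :: "('v::real_vector \<Rightarrow> 'v \<Rightarrow> 'w::real_vector) \<Rightarrow> bool" where
  "bilinear_map f \<longleftrightarrow>
     (\<forall>x y z. f (x + y) z = f x z + f y z) \<and>
     (\<forall>x y z. f x (y + z) = f x y + f x z) \<and>
     (\<forall>c x y. f (c *\<^sub>R x) y = c *\<^sub>R f x y) \<and>
     (\<forall>c x y. f x (c *\<^sub>R y) = c *\<^sub>R f x y)"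

definition majorana_space :: "('v::real_vector \<Rightarrow> 'v \<Rightarrow> real) \<Rightarrow> ('v \<Rightarrow> 'v \<Rightarrow> 'v) \<Rightarrow> bool" where
  "majorana_space B m \<longleftrightarrow>
     bilinear_map B \<and> (\<forall>u v. B u v = B v u) \<and> (\<forall>v. v \<noteq> 0 \<longrightarrow> B v v > 0) \<and>
     bilinear_map m \<and> (\<forall>u v. m u v = m v u) \<and>
     (\<forall>u v w. B u (m v w) = B (m u v) w) \<and>
     (\<forall>u v. B (m u u) (m v v) \<ge> B (m u v) (m u v))"

definition eigsp :: "('v::real_vector \<Rightarrow> 'v \<Rightarrow> 'v) \<Rightarrow> 'v \<Rightarrow> real \<Rightarrow> 'v set" where
  "eigsp m a \<mu> = {v. m a v = \<mu> *\<^sub>R v}"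

definition vplus :: "('v::real_vector \<Rightarrow> 'v \<Rightarrow> 'v) \<Rightarrow> 'v \<Rightarrow> 'v set" where
  "vplus m a = {x + y + z | x y z. x \<in> eigsp m a 1 \<and> y \<in> eigsp m a 0 \<and> z \<in> eigsp m a (1/4)}"

text \<open>The Majorana involution tau(a): +1 on V_1+V_0+V_{1/4}, -1 on V_{1/32}
  (meaningful when M4 holds).\<close>
definition tau :: "('v::real_vector \<Rightarrow> 'v \<Rightarrow> 'v) \<Rightarrow> 'v \<Rightarrow> 'v \<Rightarrow> 'v" where
  "tau m a v = (THE w. \<exists>x y z u. x \<in> eigsp m a 1 \<and> y \<in> eigsp m a 0 \<and>
       z \<in> eigsp m a (1/4) \<and> u \<in> eigsp m a (1/32) \<and> v = x + y + z + u \<and> w = x + y + z - u)"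

definition sigma :: "('v::real_vector \<Rightarrow> 'v \<Rightarrow> 'v) \<Rightarrow> 'v \<Rightarrow> 'v \<Rightarrow> 'v" where
  "sigma m a v = (THE w. \<exists>x y z. x \<in> eigsp m a 1 \<and> y \<in> eigsp m a 0 \<and>
       z \<in> eigsp m a (1/4) \<and> v = x + y + z \<and> w = x + y - z)"

definition majorana_axis :: "('v::real_vector \<Rightarrow> 'v \<Rightarrow> real) \<Rightarrow> ('v \<Rightarrow> 'v \<Rightarrow> 'v) \<Rightarrow> 'v \<Rightarrow> bool" where
  "majorana_axis B m a \<longleftrightarrow>
     a \<noteq> 0 \<and>
     \<comment> \<open>M3\<close>
     B a a = 1 \<and> m a a = a \<and>
     \<comment> \<open>M4: V is the direct sum of the four eigenspaces\<close>
     (\<forall>v. \<exists>!(x, y, z, u). x \<in> eigsp m a 1 \<and> y \<in> eigsp m a 0 \<and>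
          z \<in> eigsp m a (1/4) \<and> u \<in> eigsp m a (1/32) \<and> v = x + y + z + u) \<and>
     \<comment> \<open>M5\<close>
     eigsp m a 1 = range (\<lambda>c. c *\<^sub>R a) \<and>
     \<comment> \<open>M6\<close>
     (\<forall>u v. tau m a (m u v) = m (tau m a u) (tau m a v)) \<and>
     \<comment> \<open>M7\<close>
     (\<forall>u \<in> vplus m a. \<forall>v \<in> vplus m a. sigma m a (m u v) = m (sigma m a u) (sigma m a v))"

definition gen_subalg :: "('v::real_vector \<Rightarrow> 'v \<Rightarrow> 'v) \<Rightarrow> 'v set \<Rightarrow> 'v set" where
  "gen_subalg m A = \<Inter> {S. A \<subseteq> S \<and> 0 \<in> S \<and> (\<forall>x\<in>S. \<forall>y\<in>S. x + y \<in> S) \<and>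
       (\<forall>c. \<forall>x\<in>S. c *\<^sub>R x \<in> S) \<and> (\<forall>x\<in>S. \<forall>y\<in>S. m x y \<in> S)}"

definition majorana_algebra :: "('v::real_vector \<Rightarrow> 'v \<Rightarrow> real) \<Rightarrow> ('v \<Rightarrow> 'v \<Rightarrow> 'v) \<Rightarrow> 'v set \<Rightarrow> bool" where
  "majorana_algebra B m A \<longleftrightarrow> majorana_space B m \<and> (\<forall>a\<in>A. majorana_axis B m a) \<and>
     gen_subalg m A = UNIV"

end

theory Submission
  imports Defs
begin

lemma bil:
  assumes "bilinear_map f"
  shows "f (x+y) z = f x z + f y z" "f x (y+z) = f x y + f x z"
    "f (c *\<^sub>R x) z = c *\<^sub>R f x z" "f x (c *\<^sub>R z) = c *\<^sub>R f x z"
    "f 0 z = 0" "f x 0 = 0" "f (-x) z = - f x z" "f x (-z) = - f x z"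
    "f (x - y) z = f x z - f y z" "f x (y - z) = f x y - f x z"
proof -
  have a1: "\<And>x y z. f (x+y) z = f x z + f y z" and a2: "\<And>x y z. f x (y+z) = f x y + f x z"
    and a3: "\<And>c x z. f (c *\<^sub>R x) z = c *\<^sub>R f x z" and a4: "\<And>c x z. f x (c *\<^sub>R z) = c *\<^sub>R f x z"
    using assms unfolding bilinear_map_def by blast+
  show "f (x+y) z = f x z + f y z" "f x (y+z) = f x y + f x z"
    "f (c *\<^sub>R x) z = c *\<^sub>R f x z" "f x (c *\<^sub>R z) = c *\<^sub>R f x z" by (rule a1 a2 a3 a4)+
  show 2: "f 0 z = 0" using a3[where c=0 and x=0 and z=z] by simp
  show 3: "f x 0 = 0" using a4[where c=0 and x=x and z=0] by simp
  have n4: "\<And>x z. f (-x) z = - f x z" using a3[where c="-1"] by simp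
  have n5: "\<And>x z. f x (-z) = - f x z" using a4[where c="-1"] by simp
  show "f (-x) z = - f x z" "f x (-z) = - f x z" by (rule n4 n5)+
  show "f (x - y) z = f x z - f y z" using a1[where x=x and y="-y" and z=z] n4 by simp
  show "f x (y - z) = f x y - f x z" using a2[where x=x and y=y and z="-z"] n5 by simp
qed

lemma two_zero: "(u::'v::real_vector) = - u \<Longrightarrow> u = 0"
  proof -
  assume "u = - u" then have "2 *\<^sub>R u = 0" by (metis add.right_inverse scaleR_2)
  then show ?thesis by simp
qed

lemma ex1_4: "(\<exists>!(x,y,z,u). P x y z u) \<longleftrightarrow> (\<exists>x y z u. P x y z u) \<and>
   (\<forall>x y z u x' y' z' u'. P x y z u \<longrightarrow> P x' y' z' u' \<longrightarrow> x=x' \<and> y=y' \<and> z=z' \<and> u=u')"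
proof
  assume h: "\<exists>!(x,y,z,u). P x y z u"
  then obtain t where t: "case t of (x,y,z,u) \<Rightarrow> P x y z u"
    and uq: "\<And>t'. (case t' of (x,y,z,u) \<Rightarrow> P x y z u) \<Longrightarrow> t' = t" by (elim ex1E) blast
  show "(\<exists>x y z u. P x y z u) \<and>
   (\<forall>x y z u x' y' z' u'. P x y z u \<longrightarrow> P x' y' z' u' \<longrightarrow> x=x' \<and> y=y' \<and> z=z' \<and> u=u')"
  proof
    show "\<exists>x y z u. P x y z u" using t by (cases t) auto
    show "\<forall>x y z u x' y' z' u'. P x y z u \<longrightarrow> P x' y' z' u' \<longrightarrow> x=x' \<and> y=y' \<and> z=z' \<and> u=u'"
    proof (intro allI impI)
      fix x y z u x' y' z' u' assume "P x y z u" "P x' y' z' u'"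
      then have "(x,y,z,u) = t" "(x',y',z',u') = t" using uq by auto
      then show "x=x' \<and> y=y' \<and> z=z' \<and> u=u'" by auto
    qed
  qed
next
  assume h: "(\<exists>x y z u. P x y z u) \<and>
   (\<forall>x y z u x' y' z' u'. P x y z u \<longrightarrow> P x' y' z' u' \<longrightarrow> x=x' \<and> y=y' \<and> z=z' \<and> u=u')"
  then obtain x y z u where p: "P x y z u" by blast
  show "\<exists>!(x,y,z,u). P x y z u"
  proof (rule ex1I[of _ "(x,y,z,u)"])
    show "case (x,y,z,u) of (x,y,z,u) \<Rightarrow> P x y z u" using p by simp
    fix t assume "case t of (x,y,z,u) \<Rightarrow> P x y z u"
    then show "t = (x,y,z,u)" using h p by (cases t) (metis (mono_tags) case_prod_conv)
  qed
qed


lemma eig_closed: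
  assumes "bilinear_map m"
  shows "x \<in> eigsp m a \<mu> \<Longrightarrow> y \<in> eigsp m a \<mu> \<Longrightarrow> x + y \<in> eigsp m a \<mu>"
    "x \<in> eigsp m a \<mu> \<Longrightarrow> c *\<^sub>R x \<in> eigsp m a \<mu>"
    "x \<in> eigsp m a \<mu> \<Longrightarrow> - x \<in> eigsp m a \<mu>"
    "0 \<in> eigsp m a \<mu>"
  using bil[OF assms] by (auto simp: eigsp_def scaleR_add_right)

definition uniq4 :: "('v::real_vector \<Rightarrow> 'v \<Rightarrow> 'v) \<Rightarrow> 'v \<Rightarrow> bool" where
  "uniq4 m a \<longleftrightarrow> (\<forall>x y z u x' y' z' u'.
     x \<in> eigsp m a 1 \<and> y \<in> eigsp m a 0 \<and> z \<in> eigsp m a (1/4) \<and> u \<in> eigsp m a (1/32) \<longrightarrow>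
     x' \<in> eigsp m a 1 \<and> y' \<in> eigsp m a 0 \<and> z' \<in> eigsp m a (1/4) \<and> u' \<in> eigsp m a (1/32) \<longrightarrow>
     x + y + z + u = x' + y' + z' + u' \<longrightarrow> x = x' \<and> y = y' \<and> z = z' \<and> u = u')"

definition ex4 :: "('v::real_vector \<Rightarrow> 'v \<Rightarrow> 'v) \<Rightarrow> 'v \<Rightarrow> bool" where
  "ex4 m a \<longleftrightarrow> (\<forall>v. \<exists>x y z u.
     x \<in> eigsp m a 1 \<and> y \<in> eigsp m a 0 \<and> z \<in> eigsp m a (1/4) \<and> u \<in> eigsp m a (1/32) \<and>
     v = x + y + z + u)"

lemma M4_iff:
  "(\<forall>v. \<exists>!(x, y, z, u). x \<in> eigsp m a 1 \<and> y \<in> eigsp m a 0 \<and>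
          z \<in> eigsp m a (1/4) \<and> u \<in> eigsp m a (1/32) \<and> v = x + y + z + u) \<longleftrightarrow> ex4 m a \<and> uniq4 m a"
  (is "(\<forall>v. \<exists>!(x, y, z, u). ?P v x y z u) \<longleftrightarrow> _")
proof -
  have "(\<forall>v. \<exists>!(x, y, z, u). ?P v x y z u) \<longleftrightarrow> (\<forall>v. (\<exists>x y z u. ?P v x y z u) \<and>
     (\<forall>x y z u x' y' z' u'. ?P v x y z u \<longrightarrow> ?P v x' y' z' u' \<longrightarrow> x=x' \<and> y=y' \<and> z=z' \<and> u=u'))"
    by (simp only: ex1_4)
  also have "\<dots> \<longleftrightarrow> ex4 m a \<and> uniq4 m a"
  proof
    assume h: "\<forall>v. (\<exists>x y z u. ?P v x y z u) \<and>
     (\<forall>x y z u x' y' z' u'. ?P v x y z u \<longrightarrow> ?P v x' y' z' u' \<longrightarrow> x=x' \<and> y=y' \<and> z=z' \<and> u=u')"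
    have "ex4 m a" unfolding ex4_def using h by blast
    moreover have "uniq4 m a" unfolding uniq4_def
    proof (intro allI impI)
      fix x y z u x' y' z' u'
      assume a: "x \<in> eigsp m a 1 \<and> y \<in> eigsp m a 0 \<and> z \<in> eigsp m a (1/4) \<and> u \<in> eigsp m a (1/32)"
        and b: "x' \<in> eigsp m a 1 \<and> y' \<in> eigsp m a 0 \<and> z' \<in> eigsp m a (1/4) \<and> u' \<in> eigsp m a (1/32)"
        and c: "x + y + z + u = x' + y' + z' + u'"
      have "?P (x+y+z+u) x y z u" using a by simp
      moreover have "?P (x+y+z+u) x' y' z' u'" using b c by simp
      ultimately show "x = x' \<and> y = y' \<and> z = z' \<and> u = u'" using h by blast
    qed
    ultimately show "ex4 m a \<and> uniq4 m a" ..
  next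
    assume h: "ex4 m a \<and> uniq4 m a"
    show "\<forall>v. (\<exists>x y z u. ?P v x y z u) \<and>
     (\<forall>x y z u x' y' z' u'. ?P v x y z u \<longrightarrow> ?P v x' y' z' u' \<longrightarrow> x=x' \<and> y=y' \<and> z=z' \<and> u=u')"
    proof (intro allI)
      fix v show "(\<exists>x y z u. ?P v x y z u) \<and>
     (\<forall>x y z u x' y' z' u'. ?P v x y z u \<longrightarrow> ?P v x' y' z' u' \<longrightarrow> x=x' \<and> y=y' \<and> z=z' \<and> u=u')"
      proof (rule conjI)
      show "\<exists>x y z u. ?P v x y z u" using h unfolding ex4_def by blast
      show "\<forall>x y z u x' y' z' u'. ?P v x y z u \<longrightarrow> ?P v x' y' z' u' \<longrightarrow> x=x' \<and> y=y' \<and> z=z' \<and> u=u'"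
      proof (intro allI impI)
      fix x y z u x' y' z' u' assume a: "?P v x y z u" and b: "?P v x' y' z' u'"
      then have c: "x + y + z + u = x' + y' + z' + u'" by simp
      show "x = x' \<and> y = y' \<and> z = z' \<and> u = u'" using h a b c unfolding uniq4_def by blast
    qed qed qed
  qed
  finally show ?thesis .
qed

lemma uniq4D:
  assumes "uniq4 m a" "x \<in> eigsp m a 1" "y \<in> eigsp m a 0" "z \<in> eigsp m a (1/4)" "u \<in> eigsp m a (1/32)"
   "x' \<in> eigsp m a 1" "y' \<in> eigsp m a 0" "z' \<in> eigsp m a (1/4)" "u' \<in> eigsp m a (1/32)"
   "x + y + z + u = x' + y' + z' + u'"
  shows "x = x' \<and> y = y' \<and> z = z' \<and> u = u'"
  using assms unfolding uniq4_def by blast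

lemma tau_eq:
  assumes "uniq4 m a" "x \<in> eigsp m a 1" "y \<in> eigsp m a 0" "z \<in> eigsp m a (1/4)" "u \<in> eigsp m a (1/32)"
  shows "tau m a (x + y + z + u) = x + y + z - u"
  unfolding tau_def
proof (rule the_equality)
  show "\<exists>xa y' z' u'. xa \<in> eigsp m a 1 \<and> y' \<in> eigsp m a 0 \<and> z' \<in> eigsp m a (1/4) \<and> u' \<in> eigsp m a (1/32) \<and>
     x + y + z + u = xa + y' + z' + u' \<and> x + y + z - u = xa + y' + z' - u'" using assms by blast
  fix w assume "\<exists>xa y' z' u'. xa \<in> eigsp m a 1 \<and> y' \<in> eigsp m a 0 \<and> z' \<in> eigsp m a (1/4) \<and> u' \<in> eigsp m a (1/32) \<and>
     x + y + z + u = xa + y' + z' + u' \<and> w = xa + y' + z' - u'"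
  then obtain x' y' z' u' where h: "x' \<in> eigsp m a 1" "y' \<in> eigsp m a 0" "z' \<in> eigsp m a (1/4)" "u' \<in> eigsp m a (1/32)"
     "x + y + z + u = x' + y' + z' + u'" "w = x' + y' + z' - u'" by blast
  then have "x = x' \<and> y = y' \<and> z = z' \<and> u = u'" using uniq4D[OF assms(1-5) h(1-5)] by blast
  then show "w = x + y + z - u" using h by simp
qed

lemma sigma_eq:
  assumes "bilinear_map m" "uniq4 m a" "x \<in> eigsp m a 1" "y \<in> eigsp m a 0" "z \<in> eigsp m a (1/4)"
  shows "sigma m a (x + y + z) = x + y - z"
  unfolding sigma_def
proof (rule the_equality)
  show "\<exists>xa y' z'. xa \<in> eigsp m a 1 \<and> y' \<in> eigsp m a 0 \<and> z' \<in> eigsp m a (1/4) \<and>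
     x + y + z = xa + y' + z' \<and> x + y - z = xa + y' - z'" using assms by blast
  fix w assume "\<exists>xa y' z'. xa \<in> eigsp m a 1 \<and> y' \<in> eigsp m a 0 \<and> z' \<in> eigsp m a (1/4) \<and>
     x + y + z = xa + y' + z' \<and> w = xa + y' - z'"
  then obtain x' y' z' where h: "x' \<in> eigsp m a 1" "y' \<in> eigsp m a 0" "z' \<in> eigsp m a (1/4)"
     "x + y + z = x' + y' + z'" "w = x' + y' - z'" by blast
  have 0: "0 \<in> eigsp m a (1/32)" by (rule eig_closed(4)[OF assms(1)])
  have "x + y + z + 0 = x' + y' + z' + 0" using h by simp
  then have "x = x' \<and> y = y' \<and> z = z'" using uniq4D[OF assms(2-5) 0 h(1-3) 0] by blast
  then show "w = x + y - z" using h by simp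
qed

lemma orth:
  assumes "majorana_space B m" "p \<in> eigsp m a \<mu>" "q \<in> eigsp m a \<nu>" "\<mu> \<noteq> \<nu>"
  shows "B p q = 0"
proof -
  have bB: "bilinear_map B" and cm: "\<And>u v. m u v = m v u" and as: "\<And>u v w. B u (m v w) = B (m u v) w"
    using assms(1) unfolding majorana_space_def by blast+
  have "B p (m a q) = B (m p a) q" by (rule as)
  also have "m p a = m a p" by (rule cm)
  finally have e: "B p (m a q) = B (m a p) q" .
  have "m a q = \<nu> *\<^sub>R q" "m a p = \<mu> *\<^sub>R p" using assms(2,3) unfolding eigsp_def by auto
  then have "B p (\<nu> *\<^sub>R q) = B (\<mu> *\<^sub>R p) q" using e by simp
  then have "\<nu> * B p q = \<mu> * B p q" unfolding bil(3,4)[OF bB] by simp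
  then show ?thesis using assms(4) by simp
qed


lemma vplus_tau:
  assumes "bilinear_map m" "uniq4 m a" "p \<in> vplus m a"
  shows "tau m a p = p"
proof -
  obtain x y z where h: "x \<in> eigsp m a 1" "y \<in> eigsp m a 0" "z \<in> eigsp m a (1/4)" "p = x + y + z"
    using assms(3) unfolding vplus_def by blast
  have "tau m a (x + y + z + 0) = x + y + z - 0"
    by (rule tau_eq[OF assms(2) h(1-3) eig_closed(4)[OF assms(1)]])
  then show ?thesis using h(4) by simp
qed

lemma tau_fix_vplus:
  assumes "uniq4 m a" "ex4 m a" "tau m a w = w"
  shows "w \<in> vplus m a"
proof -
  obtain x y z u where h: "x \<in> eigsp m a 1" "y \<in> eigsp m a 0" "z \<in> eigsp m a (1/4)" "u \<in> eigsp m a (1/32)"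
    "w = x + y + z + u" using assms(2) unfolding ex4_def by blast
  have "tau m a w = x + y + z - u" using tau_eq[OF assms(1) h(1-4)] h(5) by simp
  then have "x + y + z + u = x + y + z - u" using assms(3) h(5) by simp
  then have "(x + y + z) + u = (x + y + z) + - u" by (simp only: diff_conv_add_uminus)
  then have "u = - u" by (simp only: add_left_cancel)
  then have "u = 0" by (rule two_zero)
  then show ?thesis using h unfolding vplus_def by auto
qed

lemma vplus_mult:
  assumes "bilinear_map m" "uniq4 m a" "ex4 m a" "\<forall>u v. tau m a (m u v) = m (tau m a u) (tau m a v)"
    "p \<in> vplus m a" "q \<in> vplus m a"
  shows "m p q \<in> vplus m a"
proof -
  have "tau m a (m p q) = m p q" using assms(4) vplus_tau[OF assms(1,2,5)] vplus_tau[OF assms(1,2,6)] by simp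
  then show ?thesis by (rule tau_fix_vplus[OF assms(2,3)])
qed

lemma transfer:
  assumes ms: "majorana_space B m"
    and gg: "\<And>v. g (g v) = v"
    and gadd: "\<And>x y. g (x + y) = g x + g y"
    and gsc: "\<And>c x. g (c *\<^sub>R x) = c *\<^sub>R g x"
    and ghom: "\<And>u v. g (m u v) = m (g u) (g v)"
    and giso: "\<And>u v. B (g u) (g v) = B u v"
    and ax: "majorana_axis B m a"
  shows "majorana_axis B m (g a) \<and> (\<forall>v. tau m (g a) v = g (tau m a (g v)))"
proof -
  have bm: "bilinear_map m" using ms unfolding majorana_space_def by blast
  have g0: "g 0 = 0" using gsc[of 0 0] by simp
  have gneg: "\<And>x. g (- x) = - g x" using gsc[of "-1"] by simp
  have gdiff: "\<And>x y. g (x - y) = g x - g y"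
  proof -
    fix x y show "g (x - y) = g x - g y" using gadd[of x "-y"] gneg[of y] by simp
  qed
  note axs = ax[unfolded majorana_axis_def]
  note a0 = axs[THEN conjunct1]
  note aa = axs[THEN conjunct2, THEN conjunct1] axs[THEN conjunct2, THEN conjunct2, THEN conjunct1]
  note M4 = axs[THEN conjunct2, THEN conjunct2, THEN conjunct2, THEN conjunct1]
  note M5 = axs[THEN conjunct2, THEN conjunct2, THEN conjunct2, THEN conjunct2, THEN conjunct1]
  note M6 = axs[THEN conjunct2, THEN conjunct2, THEN conjunct2, THEN conjunct2, THEN conjunct2, THEN conjunct1]
  note M7 = axs[THEN conjunct2, THEN conjunct2, THEN conjunct2, THEN conjunct2, THEN conjunct2, THEN conjunct2]
  note exun = M4_iff[THEN iffD1, OF M4]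
  note ex = exun[THEN conjunct1] and un = exun[THEN conjunct2]
  have eig: "\<And>v \<mu>. v \<in> eigsp m (g a) \<mu> \<longleftrightarrow> g v \<in> eigsp m a \<mu>"
  proof -
    fix v \<mu>
    have e: "m (g a) v = g (m a (g v))" using ghom[of a "g v"] gg[of v] by simp
    have "m (g a) v = \<mu> *\<^sub>R v \<longleftrightarrow> m a (g v) = \<mu> *\<^sub>R g v"
    proof
      assume "m (g a) v = \<mu> *\<^sub>R v"
      then have "g (m (g a) v) = g (\<mu> *\<^sub>R v)" by simp
      then show "m a (g v) = \<mu> *\<^sub>R g v" using e gg gsc by simp
    next
      assume "m a (g v) = \<mu> *\<^sub>R g v"
      then show "m (g a) v = \<mu> *\<^sub>R v" using e gg gsc by simp
    qed
    then show "v \<in> eigsp m (g a) \<mu> \<longleftrightarrow> g v \<in> eigsp m a \<mu>" unfolding eigsp_def by simp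
  qed
  have eig': "\<And>v \<mu>. v \<in> eigsp m a \<mu> \<Longrightarrow> g v \<in> eigsp m (g a) \<mu>" using eig gg by simp
  have ex': "ex4 m (g a)" unfolding ex4_def
  proof
    fix v
    obtain x y z u where h: "x \<in> eigsp m a 1" "y \<in> eigsp m a 0" "z \<in> eigsp m a (1/4)" "u \<in> eigsp m a (1/32)"
      "g v = x + y + z + u" using ex unfolding ex4_def by blast
    have "v = g x + g y + g z + g u" using arg_cong[OF h(5), of g] gg gadd by simp
    then show "\<exists>x y z u. x \<in> eigsp m (g a) 1 \<and> y \<in> eigsp m (g a) 0 \<and> z \<in> eigsp m (g a) (1/4) \<and>
       u \<in> eigsp m (g a) (1/32) \<and> v = x + y + z + u" using h(1-4) eig' by blast
  qed
  have un': "uniq4 m (g a)" unfolding uniq4_def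
  proof (intro allI impI)
    fix x y z u x' y' z' u'
    assume a: "x \<in> eigsp m (g a) 1 \<and> y \<in> eigsp m (g a) 0 \<and> z \<in> eigsp m (g a) (1/4) \<and> u \<in> eigsp m (g a) (1/32)"
      and b: "x' \<in> eigsp m (g a) 1 \<and> y' \<in> eigsp m (g a) 0 \<and> z' \<in> eigsp m (g a) (1/4) \<and> u' \<in> eigsp m (g a) (1/32)"
      and c: "x + y + z + u = x' + y' + z' + u'"
    have "g x + g y + g z + g u = g x' + g y' + g z' + g u'" using arg_cong[OF c, of g] gadd by simp
    have m1: "g x \<in> eigsp m a 1" "g y \<in> eigsp m a 0" "g z \<in> eigsp m a (1/4)" "g u \<in> eigsp m a (1/32)"
      using a eig by blast+
    have m2: "g x' \<in> eigsp m a 1" "g y' \<in> eigsp m a 0" "g z' \<in> eigsp m a (1/4)" "g u' \<in> eigsp m a (1/32)"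
      using b eig by blast+
    note uniq4D[OF un m1 m2]
    then have "g x = g x' \<and> g y = g y' \<and> g z = g z' \<and> g u = g u'"
      using \<open>g x + g y + g z + g u = g x' + g y' + g z' + g u'\<close> by blast
    then show "x = x' \<and> y = y' \<and> z = z' \<and> u = u'" by (metis gg)
  qed
  have M4': "\<forall>v. \<exists>!(x, y, z, u). x \<in> eigsp m (g a) 1 \<and> y \<in> eigsp m (g a) 0 \<and>
          z \<in> eigsp m (g a) (1/4) \<and> u \<in> eigsp m (g a) (1/32) \<and> v = x + y + z + u"
    using M4_iff[THEN iffD2, OF conjI[OF ex' un']] .
  have M5': "eigsp m (g a) 1 = range (\<lambda>c. c *\<^sub>R g a)"
  proof (rule set_eqI)
    fix v
    have "v \<in> eigsp m (g a) 1 \<longleftrightarrow> (\<exists>c. g v = c *\<^sub>R a)" using eig M5 by auto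
    also have "\<dots> \<longleftrightarrow> (\<exists>c. v = c *\<^sub>R g a)"
    proof
      assume "\<exists>c. g v = c *\<^sub>R a"
      then obtain c where "g v = c *\<^sub>R a" by blast
      then have "g (g v) = g (c *\<^sub>R a)" by simp
      then have "v = c *\<^sub>R g a" using gg gsc by simp
      then show "\<exists>c. v = c *\<^sub>R g a" by blast
    next
      assume "\<exists>c. v = c *\<^sub>R g a"
      then obtain c where "v = c *\<^sub>R g a" by blast
      then have "g v = c *\<^sub>R a" using gg gsc by simp
      then show "\<exists>c. g v = c *\<^sub>R a" by blast
    qed
    finally show "v \<in> eigsp m (g a) 1 \<longleftrightarrow> v \<in> range (\<lambda>c. c *\<^sub>R g a)" by auto
  qed
  have tauf: "\<And>v. tau m (g a) v = g (tau m a (g v))"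
  proof -
    fix v
    obtain x y z u where h: "x \<in> eigsp m a 1" "y \<in> eigsp m a 0" "z \<in> eigsp m a (1/4)" "u \<in> eigsp m a (1/32)"
      "g v = x + y + z + u" using ex unfolding ex4_def by blast
    have v: "v = g x + g y + g z + g u" using arg_cong[OF h(5), of g] gg gadd by simp
    have "tau m (g a) v = g x + g y + g z - g u" unfolding v by (rule tau_eq[OF un' eig'[OF h(1)] eig'[OF h(2)] eig'[OF h(3)] eig'[OF h(4)]])
    also have "\<dots> = g (x + y + z - u)" by (simp add: gadd gdiff)
    also have "x + y + z - u = tau m a (g v)" unfolding h(5) by (rule tau_eq[OF un h(1-4), symmetric])
    finally show "tau m (g a) v = g (tau m a (g v))" .
  qed
  have M6': "\<forall>u v. tau m (g a) (m u v) = m (tau m (g a) u) (tau m (g a) v)"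
    using M6 by (simp add: tauf ghom)
  have vp: "\<And>v. v \<in> vplus m (g a) \<longleftrightarrow> g v \<in> vplus m a"
  proof
    fix v assume "v \<in> vplus m (g a)"
    then obtain x y z where h: "x \<in> eigsp m (g a) 1" "y \<in> eigsp m (g a) 0" "z \<in> eigsp m (g a) (1/4)" "v = x + y + z"
      unfolding vplus_def by blast
    have "g v = g x + g y + g z" using h(4) gadd by simp
    then show "g v \<in> vplus m a" using h(1-3) eig unfolding vplus_def by blast
  next
    fix v assume "g v \<in> vplus m a"
    then obtain x y z where h: "x \<in> eigsp m a 1" "y \<in> eigsp m a 0" "z \<in> eigsp m a (1/4)" "g v = x + y + z"
      unfolding vplus_def by blast
    have "v = g x + g y + g z" using arg_cong[OF h(4), of g] gg gadd by simp
    then show "v \<in> vplus m (g a)" using h(1-3) eig' unfolding vplus_def by blast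
  qed
  have sigf: "\<And>v. v \<in> vplus m (g a) \<Longrightarrow> sigma m (g a) v = g (sigma m a (g v))"
  proof -
    fix v assume "v \<in> vplus m (g a)"
    then have "g v \<in> vplus m a" using vp by blast
    then obtain x y z where h: "x \<in> eigsp m a 1" "y \<in> eigsp m a 0" "z \<in> eigsp m a (1/4)" "g v = x + y + z"
      unfolding vplus_def by blast
    have v: "v = g x + g y + g z" using arg_cong[OF h(4), of g] gg gadd by simp
    have "sigma m (g a) v = g x + g y - g z" unfolding v by (rule sigma_eq[OF bm un' eig'[OF h(1)] eig'[OF h(2)] eig'[OF h(3)]])
    also have "\<dots> = g (x + y - z)" by (simp add: gadd gdiff)
    also have "x + y - z = sigma m a (g v)" unfolding h(4) by (rule sigma_eq[OF bm un h(1-3), symmetric])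
    finally show "sigma m (g a) v = g (sigma m a (g v))" .
  qed
  have M7': "\<forall>u \<in> vplus m (g a). \<forall>v \<in> vplus m (g a). sigma m (g a) (m u v) = m (sigma m (g a) u) (sigma m (g a) v)"
  proof (intro ballI)
    fix u v assume u: "u \<in> vplus m (g a)" and v: "v \<in> vplus m (g a)"
    have gu: "g u \<in> vplus m a" and gv: "g v \<in> vplus m a" using u v vp by blast+
    have "g (m u v) \<in> vplus m a" unfolding ghom by (rule vplus_mult[OF bm un ex M6 gu gv])
    then have uv: "m u v \<in> vplus m (g a)" using vp by blast
    have "sigma m (g a) (m u v) = g (sigma m a (m (g u) (g v)))" using sigf[OF uv] ghom by simp
    also have "\<dots> = g (m (sigma m a (g u)) (sigma m a (g v)))" using M7 gu gv by simp
    also have "\<dots> = m (sigma m (g a) u) (sigma m (g a) v)" using sigf[OF u] sigf[OF v] ghom by simp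
    finally show "sigma m (g a) (m u v) = m (sigma m (g a) u) (sigma m (g a) v)" .
  qed
  have ga0: "g a \<noteq> 0" proof
    assume "g a = 0" then have "g (g a) = g 0" by simp
    then show False using a0 g0 gg by simp
  qed
  have "B (g a) (g a) = 1" "m (g a) (g a) = g a" using aa giso ghom[of a a, symmetric] by simp_all
  then have "majorana_axis B m (g a)" unfolding majorana_axis_def using ga0 M4' M5' M6' M7' by (intro conjI)
  then show ?thesis using tauf by blast
qed


theorem mainTheorem1:
  fixes B :: "'v::real_vector \<Rightarrow> 'v \<Rightarrow> real" and m :: "'v \<Rightarrow> 'v \<Rightarrow> 'v"
    and A :: "'v set" and a0 a1 :: 'v
  assumes "majorana_algebra B m A"
    and "a0 \<in> A" and "a1 \<in> A"
    and "tau m a1 = id"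
  shows "majorana_axis B m (sigma m a1 a0) \<and>
         tau m (sigma m a1 a0) = sigma m a1 \<circ> tau m a0 \<circ> inv (sigma m a1)"
proof -
  have ms: "majorana_space B m" using assms(1) unfolding majorana_algebra_def by blast
  have ax0: "majorana_axis B m a0" and ax1: "majorana_axis B m a1"
    using assms(1-3) unfolding majorana_algebra_def by blast+
  have bm: "bilinear_map m" and bB: "bilinear_map B" using ms unfolding majorana_space_def by blast+
  note axs = ax1[unfolded majorana_axis_def]
  note M4 = axs[THEN conjunct2, THEN conjunct2, THEN conjunct2, THEN conjunct1]
  note M7 = axs[THEN conjunct2, THEN conjunct2, THEN conjunct2, THEN conjunct2, THEN conjunct2, THEN conjunct2]
  note exun = M4_iff[THEN iffD1, OF M4]
  note ex = exun[THEN conjunct1] and un = exun[THEN conjunct2]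
  define s where "s = sigma m a1"
  have vp: "\<And>v. v \<in> vplus m a1"
    using tau_fix_vplus[OF un ex] assms(4) by simp
  have dec: "\<And>v. \<exists>x y z. x \<in> eigsp m a1 1 \<and> y \<in> eigsp m a1 0 \<and> z \<in> eigsp m a1 (1/4) \<and> v = x + y + z"
    using vp unfolding vplus_def by blast
  have sf: "\<And>x y z. x \<in> eigsp m a1 1 \<Longrightarrow> y \<in> eigsp m a1 0 \<Longrightarrow> z \<in> eigsp m a1 (1/4) \<Longrightarrow>
      s (x + y + z) = x + y - z"
    unfolding s_def by (rule sigma_eq[OF bm un])
  note ec = eig_closed[OF bm]
  have gg: "\<And>v. s (s v) = v"
  proof -
    fix v
    obtain x y z where h: "x \<in> eigsp m a1 1" "y \<in> eigsp m a1 0" "z \<in> eigsp m a1 (1/4)" "v = x + y + z"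
      using dec by blast
    have "s v = x + y + (- z)" using sf[OF h(1-3)] h(4) by simp
    then have "s (s v) = x + y - (- z)" using sf[OF h(1,2) ec(3)[OF h(3)]] by simp
    then show "s (s v) = v" using h(4) by simp
  qed
  have gadd: "\<And>v w. s (v + w) = s v + s w"
  proof -
    fix v w
    obtain x y z where h: "x \<in> eigsp m a1 1" "y \<in> eigsp m a1 0" "z \<in> eigsp m a1 (1/4)" "v = x + y + z"
      using dec by blast
    obtain x' y' z' where h': "x' \<in> eigsp m a1 1" "y' \<in> eigsp m a1 0" "z' \<in> eigsp m a1 (1/4)" "w = x' + y' + z'"
      using dec by blast
    have "v + w = (x + x') + (y + y') + (z + z')" using h(4) h'(4) by (simp add: algebra_simps)
    then have "s (v + w) = (x + x') + (y + y') - (z + z')"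
      using sf[OF ec(1)[OF h(1) h'(1)] ec(1)[OF h(2) h'(2)] ec(1)[OF h(3) h'(3)]] by simp
    also have "\<dots> = (x + y - z) + (x' + y' - z')" by (simp add: algebra_simps)
    also have "\<dots> = s v + s w" using sf[OF h(1-3)] sf[OF h'(1-3)] h(4) h'(4) by simp
    finally show "s (v + w) = s v + s w" .
  qed
  have gsc: "\<And>c v. s (c *\<^sub>R v) = c *\<^sub>R s v"
  proof -
    fix c v
    obtain x y z where h: "x \<in> eigsp m a1 1" "y \<in> eigsp m a1 0" "z \<in> eigsp m a1 (1/4)" "v = x + y + z"
      using dec by blast
    have "c *\<^sub>R v = c *\<^sub>R x + c *\<^sub>R y + c *\<^sub>R z" using h(4) by (simp add: scaleR_add_right)
    then have "s (c *\<^sub>R v) = c *\<^sub>R x + c *\<^sub>R y - c *\<^sub>R z"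
      using sf[OF ec(2)[OF h(1)] ec(2)[OF h(2)] ec(2)[OF h(3)]] by simp
    also have "\<dots> = c *\<^sub>R (x + y - z)" by (simp add: scaleR_add_right scaleR_diff_right)
    also have "\<dots> = c *\<^sub>R s v" using sf[OF h(1-3)] h(4) by simp
    finally show "s (c *\<^sub>R v) = c *\<^sub>R s v" .
  qed
  have ghom: "\<And>u v. s (m u v) = m (s u) (s v)"
    unfolding s_def using M7 vp by blast
  have giso: "\<And>u v. B (s u) (s v) = B u v"
  proof -
    fix v w
    obtain x y z where h: "x \<in> eigsp m a1 1" "y \<in> eigsp m a1 0" "z \<in> eigsp m a1 (1/4)" "v = x + y + z"
      using dec by blast
    obtain x' y' z' where h': "x' \<in> eigsp m a1 1" "y' \<in> eigsp m a1 0" "z' \<in> eigsp m a1 (1/4)" "w = x' + y' + z'"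
      using dec by blast
    have o1: "B x z' = 0" by (rule orth[OF ms h(1) h'(3)]) simp
    have o2: "B y z' = 0" by (rule orth[OF ms h(2) h'(3)]) simp
    have o3: "B z x' = 0" by (rule orth[OF ms h(3) h'(1)]) simp
    have o4: "B z y' = 0" by (rule orth[OF ms h(3) h'(2)]) simp
    have sv: "s v = x + y - z" using sf[OF h(1-3)] h(4) by simp
    have sw: "s w = x' + y' - z'" using sf[OF h'(1-3)] h'(4) by simp
    note bs = bil[OF bB]
    have "B (s v) (s w) = B (x + y - z) (x' + y' - z')" using sv sw by simp
    also have "\<dots> = B x x' + B x y' - B x z' + (B y x' + B y y' - B y z') - (B z x' + B z y' - B z z')"
      by (simp only: bs)
    also have "\<dots> = B x x' + B x y' + B x z' + (B y x' + B y y' + B y z') + (B z x' + B z y' + B z z')"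
      using o1 o2 o3 o4 by simp
    also have "\<dots> = B (x + y + z) (x' + y' + z')" by (simp only: bs)
    also have "\<dots> = B v w" using h(4) h'(4) by simp
    finally show "B (s v) (s w) = B v w" .
  qed
  have T: "majorana_axis B m (s a0) \<and> (\<forall>v. tau m (s a0) v = s (tau m a0 (s v)))"
    by (rule transfer[OF ms gg gadd gsc ghom giso ax0])
  have ss: "s \<circ> s = id" using gg by auto
  have invs: "inv s = s" by (rule inv_unique_comp[OF ss ss])
  have "tau m (s a0) = s \<circ> tau m a0 \<circ> inv s" using T invs by auto
  then show ?thesis using T unfolding s_def by simp
qed

end
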